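(* Let $(\Omega,\mathcal{M})$ be a measurable space, $f\in\mathcal{F}_1(a,b)$, and $w_0=f'_+(1)$ (the right derivative of $f$ at $1$). Suppose $w_0$ lies in the interior of $\{f^*<\infty\}$ and $f$ is strictly convex on a neighborhood of $1$. If $P_n,P$ are probability measures on $\Omega$ and either $D_f(P_n\|P)\to0$ or $D_f(P\|P_n)\to0$, then $P_n\to P$ setwise, i.e. $P_n(A)\to P(A)$ for all $A\in\mathcal{M}$. If moreover $\Omega$ is a metric space and $\mathcal{M}$ its Borel $\sigma$-algebra, then $P_n\to P$ weakly.
   Context: For $-\infty\le a<1<b\le\infty$, $\mathcal{F}_1(a,b)$ is the set of convex functions $f:(a,b)\to\mathbb{R}$ with $f(1)=0$; $f$ is extended to $[a,b]$ by continuity and set to $\infty$ outside $[a,b]$. The $f$-divergence of probability measures is $D_f(\nu\|\mu)=E_\mu[f(d\nu/d\mu)]$ if $\nu\ll\mu$ and $\infty$ otherwise. $f^*(y)=\sup_{z}\{yz-f(z)\}$ is the Legendre transform of $f$. *)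

theory Defs
  imports "HOL-Probability.Probability"
begin

definition ioo :: "ereal \<Rightarrow> ereal \<Rightarrow> real set" where
  "ioo a b = {x. a < ereal x \<and> ereal x < b}"

definition F1 :: "ereal \<Rightarrow> ereal \<Rightarrow> (real \<Rightarrow> real) \<Rightarrow> bool" where
  "F1 a b f \<longleftrightarrow> a < 1 \<and> 1 < b \<and> convex_on (ioo a b) f \<and> f 1 = 0"

definition fext :: "ereal \<Rightarrow> ereal \<Rightarrow> (real \<Rightarrow> real) \<Rightarrow> real \<Rightarrow> ereal" where
  "fext a b f x =
     (if x \<in> ioo a b then ereal (f x)
      else if ereal x = a then Lim (at_right x) (\<lambda>t. ereal (f t))
      else if ereal x = b then Lim (at_left x) (\<lambda>t. ereal (f t))
      else \<infinity>)"

definition legendre :: "ereal \<Rightarrow> ereal \<Rightarrow> (real \<Rightarrow> real) \<Rightarrow> real \<Rightarrow> ereal" where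
  "legendre a b f y = (SUP z. ereal (y * z) - fext a b f z)"

definition right_deriv :: "(real \<Rightarrow> real) \<Rightarrow> real \<Rightarrow> real" where
  "right_deriv f x = Lim (at_right x) (\<lambda>t. (f t - f x) / (t - x))"

definition strictly_convex_on :: "real set \<Rightarrow> (real \<Rightarrow> real) \<Rightarrow> bool" where
  "strictly_convex_on S f \<longleftrightarrow>
     (\<forall>x\<in>S. \<forall>y\<in>S. \<forall>u::real. x \<noteq> y \<and> 0 < u \<and> u < 1 \<longrightarrow>
        f (u * x + (1 - u) * y) < u * f x + (1 - u) * f y)"

text \<open>f-divergence D_f(nu || mu) = E_mu[f(d nu / d mu)] if nu << mu, infinity otherwise.\<close>
definition fdiv :: "ereal \<Rightarrow> ereal \<Rightarrow> (real \<Rightarrow> real) \<Rightarrow> 'a measure \<Rightarrow> 'a measure \<Rightarrow> ereal" where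
  "fdiv a b f \<nu> \<mu> =
     (if absolutely_continuous \<mu> \<nu> then
        (let g = (\<lambda>x. fext a b f (enn2real (RN_deriv \<mu> \<nu> x))) in
          enn2ereal (\<integral>\<^sup>+ x. e2ennreal (max 0 (g x)) \<partial>\<mu>)
          - enn2ereal (\<integral>\<^sup>+ x. e2ennreal (max 0 (- g x)) \<partial>\<mu>))
      else \<infinity>)"

definition metric_borel_sets :: "'a set \<Rightarrow> ('a \<Rightarrow> 'a \<Rightarrow> real) \<Rightarrow> 'a set set" where
  "metric_borel_sets S d = sigma_sets S {U. openin (Metric_space.mtopology S d) U}"

definition weak_conv_metric ::
  "'a set \<Rightarrow> ('a \<Rightarrow> 'a \<Rightarrow> real) \<Rightarrow> (nat \<Rightarrow> 'a measure) \<Rightarrow> 'a measure \<Rightarrow> bool" where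
  "weak_conv_metric S d Pn P \<longleftrightarrow>
     (\<forall>g. continuous_map (Metric_space.mtopology S d) euclideanreal g \<and>
          bounded (g ` S) \<longrightarrow>
          (\<lambda>n. \<integral>x. g x \<partial>Pn n) \<longlonglongrightarrow> (\<integral>x. g x \<partial>P))"

end

theory Submission
  imports Defs
begin


lemma F1_basic:
  assumes "F1 a b f"
  shows "convex_on (ioo a b) f" "f 1 = 0" "a < 1" "1 < b" "1 \<in> ioo a b"
  using assms by (auto simp: F1_def ioo_def one_ereal_def[symmetric])

lemma slope_mono3:
  fixes f :: "real \<Rightarrow> real"
  assumes cv: "convex_on I f" and t: "t \<in> I" "t < 1" and u: "u \<in> I" "1 < u" and one: "1 \<in> I"
  shows "(f 1 - f t) / (1 - t) \<le> (f u - f 1) / (u - 1)"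
proof -
  have e1: "(f t - f u) / (t - u) \<le> (f 1 - f u) / (1 - u)"
    using convex_on_slope_le(2)[OF cv t(1) u(1), of 1] t u by simp
  have e2: "(f t - f 1) / (t - 1) \<le> (f t - f u) / (t - u)"
    using convex_on_slope_le(1)[OF cv t(1) u(1), of 1] t u by simp
  have "(f 1 - f t) / (1 - t) = (f t - f 1) / (t - 1)"
    by (metis minus_diff_eq minus_divide_divide)
  moreover have "(f u - f 1) / (u - 1) = (f 1 - f u) / (1 - u)"
    by (metis minus_diff_eq minus_divide_divide)
  ultimately show ?thesis using e1 e2 by linarith
qed

lemma F1_subgrad:
  assumes "F1 a b f"
  shows "\<exists>s. \<forall>t\<in>ioo a b. s * (t - 1) \<le> f t"
proof -
  note B = F1_basic[OF assms]
  obtain u where u1: "1 < ereal u" "ereal u < b"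
    using ereal_dense2[OF B(4)] by blast
  have "a < ereal u" using B(3) u1(1) by (rule order.strict_trans)
  then have u: "u \<in> ioo a b" "1 < u"
    using u1 by (auto simp: ioo_def one_ereal_def)
  obtain w where w1: "a < ereal w" "ereal w < 1"
    using ereal_dense2[OF B(3)] by blast
  have "ereal w < b" using w1(2) B(4) by (rule order.strict_trans)
  then have w: "w \<in> ioo a b" "w < 1"
    using w1 by (auto simp: ioo_def one_ereal_def)
  define S where "S = (\<lambda>t. (f 1 - f t) / (1 - t)) ` (ioo a b \<inter> {..<1})"
  have upper: "y \<le> (f v - f 1) / (v - 1)" if "y \<in> S" "v \<in> ioo a b" "1 < v" for y v
    using that slope_mono3[OF B(1) _ _ that(2,3) B(5)] by (auto simp: S_def)
  have ne: "S \<noteq> {}" using w by (auto simp: S_def)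
  have bdd: "bdd_above S" using upper[OF _ u] by (rule bdd_aboveI)
  define s where "s = Sup S"
  show ?thesis
  proof (intro exI ballI)
    fix t assume t: "t \<in> ioo a b"
    consider "t < 1" | "t = 1" | "1 < t" by linarith
    then show "s * (t - 1) \<le> f t"
    proof cases
      case 1
      then have "(f 1 - f t) / (1 - t) \<le> s" unfolding s_def
        using t bdd by (intro cSup_upper) (auto simp: S_def)
      then have "f 1 - f t \<le> s * (1 - t)" using 1 by (simp add: pos_divide_le_eq)
      then show ?thesis using B(2) by (simp add: algebra_simps)
    next
      case 2 then show ?thesis using B(2) by simp
    next
      case 3
      then have "s \<le> (f t - f 1) / (t - 1)" unfolding s_def
        using t ne upper by (intro cSup_least) auto
      then have "s * (t - 1) \<le> f t - f 1" using 3 by (simp add: pos_le_divide_eq)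
      then show ?thesis using B(2) by (simp add: algebra_simps)
    qed
  qed
qed


lemma convex_between:
  fixes h :: "real \<Rightarrow> real"
  assumes cv: "convex_on I h" and x: "x \<in> I" and y: "y \<in> I" and xc: "x \<le> c" and cy: "c \<le> y" and xy: "x < y"
  shows "h c * (y - x) \<le> (y - c) * h x + (c - x) * h y"
proof -
  define t where "t = (c - x) / (y - x)"
  have t0: "0 \<le> t" "t \<le> 1" using xc cy xy by (auto simp: t_def field_simps)
  have "t * (y - x) = c - x" using xy by (simp add: t_def)
  then have "(1 - t) *\<^sub>R x + t *\<^sub>R y = c" by (simp add: algebra_simps)
  then have "h c \<le> (1 - t) * h x + t * h y" using convex_onD[OF cv t0 x y] by simp
  then have "h c * (y - x) \<le> ((1 - t) * h x + t * h y) * (y - x)" using xy by (simp add: mult_right_mono)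
  also have "\<dots> = ((1 - t) * (y - x)) * h x + (t * (y - x)) * h y" by (simp add: algebra_simps)
  also have "\<dots> = (y - c) * h x + (c - x) * h y"
  proof -
    have e1: "t * (y - x) = c - x" by fact
    have e2: "(1 - t) * (y - x) = y - c" using e1 by (simp add: algebra_simps)
    show ?thesis by (simp only: e1 e2)
  qed
  finally show ?thesis .
qed

locale hfun =
  fixes I :: "real set" and h :: "real \<Rightarrow> real"
  assumes cv: "convex_on I h" and one: "1 \<in> I" and h1: "h 1 = 0" and nonneg: "\<And>t. t \<in> I \<Longrightarrow> 0 \<le> h t"
begin

lemma left_anti:
  assumes "t1 \<in> I" "t2 \<in> I" "t1 \<le> t2" "t2 \<le> 1"
  shows "h t2 \<le> h t1"
proof (cases "t1 < 1")
  case True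
  have "h t2 * (1 - t1) \<le> (1 - t2) * h t1 + (t2 - t1) * h 1"
    using convex_between[OF cv assms(1) one assms(3,4) True] .
  then have "h t2 * (1 - t1) \<le> (1 - t2) * h t1" using h1 by simp
  also have "\<dots> \<le> (1 - t1) * h t1" using assms nonneg[OF assms(1)] by (intro mult_right_mono) auto
  finally show ?thesis using True by (simp add: mult.commute)
next
  case False then have "t1 = t2" using assms by auto
  then show ?thesis by simp
qed

lemma right_mono:
  assumes "t1 \<in> I" "t2 \<in> I" "1 \<le> t1" "t1 \<le> t2"
  shows "h t1 \<le> h t2"
proof (cases "1 < t2")
  case True
  have "h t1 * (t2 - 1) \<le> (t2 - t1) * h 1 + (t1 - 1) * h t2"
    using convex_between[OF cv one assms(2) assms(3,4) True] .
  then have "h t1 * (t2 - 1) \<le> (t1 - 1) * h t2" using h1 by simp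
  also have "\<dots> \<le> (t2 - 1) * h t2" using assms nonneg[OF assms(2)] by (intro mult_right_mono) auto
  finally show ?thesis using True by (simp add: mult.commute)
next
  case False then have "t1 = t2" using assms by auto
  then show ?thesis by simp
qed

lemma lower_lin:
  assumes d: "0 < d" "1 + d \<in> I" and t: "t \<in> I"
  shows "(h (1 + d) / d) * max 0 (t - 1 - d) \<le> h t"
proof (cases "t - 1 - d \<le> 0")
  case True then show ?thesis using nonneg[OF t] by simp
next
  case False
  have "h (1 + d) * (t - 1) \<le> (t - (1 + d)) * h 1 + (1 + d - 1) * h t"
    using convex_between[OF cv one t, of "1 + d"] False d by simp
  then have e: "h (1 + d) * (t - 1) \<le> d * h t" using h1 by simp
  have "(h (1 + d) / d) * max 0 (t - 1 - d) \<le> (h (1 + d) / d) * (t - 1)"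
    using False d nonneg[OF d(2)] by (intro mult_left_mono) auto
  also have "\<dots> = h (1 + d) * (t - 1) / d" by simp
  also have "\<dots> \<le> h t" using e d by (simp add: divide_le_eq mult.commute)
  finally show ?thesis .
qed

end


lemma convex_on_sub_affine:
  fixes f :: "real \<Rightarrow> real"
  assumes "convex_on I f"
  shows "convex_on I (\<lambda>t. f t - s * (t - 1))"
proof -
  have *: "s * (u * x + v * y - 1) = u * (s * (x - 1)) + v * (s * (y - 1))" if "u + v = 1" for u v x y :: real
  proof -
    have "s * (u * x + v * y - 1) = s * (u * x + v * y - (u + v))" using that by simp
    then show ?thesis by (simp add: algebra_simps)
  qed
  show ?thesis unfolding convex_on_def
  proof (intro conjI ballI allI impI)
    show "convex I" using assms by (simp add: convex_on_def)
    fix x y u v :: real assume xy: "x \<in> I" "y \<in> I" and uv: "0 \<le> u" "0 \<le> v" "u + v = 1"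
    have "f (u *\<^sub>R x + v *\<^sub>R y) \<le> u * f x + v * f y"
      using assms xy uv unfolding convex_on_def by blast
    then show "f (u *\<^sub>R x + v *\<^sub>R y) - s * (u *\<^sub>R x + v *\<^sub>R y - 1)
         \<le> u * (f x - s * (x - 1)) + v * (f y - s * (y - 1))"
      using *[OF uv(3), of x y] by (simp add: algebra_simps)
  qed
qed

lemma lim_at_a:
  assumes F: "F1 a b f" and sg: "\<forall>t\<in>ioo a b. s * (t - 1) \<le> f t" and ax: "a = ereal x"
  shows "\<exists>L. ((\<lambda>t. ereal (f t)) \<longlongrightarrow> L) (at_right x)"
proof -
  note B = F1_basic[OF F]
  define h where "h t = f t - s * (t - 1)" for t
  interpret hfun "ioo a b" h
    using B sg convex_on_sub_affine[OF B(1), of s] by unfold_locales (auto simp: h_def[abs_def])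
  define J where "J = {x<..<1::real}"
  have J: "t \<in> ioo a b" if "t \<in> J" for t
  proof -
    have "ereal t < 1" using that by (simp add: J_def one_ereal_def)
    then have "ereal t < b" using B(4) by (rule order.strict_trans)
    then show ?thesis using that ax by (simp add: J_def ioo_def)
  qed
  have x1: "x < 1" using B(3) ax by (simp add: one_ereal_def)
  have "((\<lambda>t. - ereal (h t)) \<longlongrightarrow> Inf ((\<lambda>t. - ereal (h t)) ` ({x<..} \<inter> J))) (at x within ({x<..} \<inter> J))"
  proof (rule Lim_right_bound[where K="-\<infinity>"])
    fix p q assume pq: "p \<in> J" "q \<in> J" "x < p" "p \<le> q"
    then have "h q \<le> h p" using left_anti[OF J[OF pq(1)] J[OF pq(2)] pq(4)] by (simp add: J_def)
    then show "- ereal (h p) \<le> - ereal (h q)" by simp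
  qed simp
  moreover have "at x within ({x<..} \<inter> J) = at_right x"
    by (rule at_within_nhd[of x "{..<1}"]) (auto simp: J_def x1)
  ultimately obtain L0 where L0: "((\<lambda>t. - ereal (h t)) \<longlongrightarrow> L0) (at_right x)"
    and L0def: "L0 = Inf ((\<lambda>t. - ereal (h t)) ` ({x<..} \<inter> J))" by auto
  have "(x + 1) / 2 \<in> {x<..} \<inter> J" using x1 by (auto simp: J_def)
  then have "L0 \<le> - ereal (h ((x + 1) / 2))" unfolding L0def by (rule INF_lower)
  then have L0f: "- L0 \<noteq> - \<infinity>" by auto
  have l1: "((\<lambda>t. ereal (h t)) \<longlongrightarrow> - L0) (at_right x)"
    using tendsto_uminus_ereal[OF L0] by simp
  have l2: "((\<lambda>t. ereal (s * (t - 1))) \<longlongrightarrow> ereal (s * (x - 1))) (at_right x)"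
    by (intro tendsto_intros)
  have "((\<lambda>t. ereal (h t) + ereal (s * (t - 1))) \<longlongrightarrow> - L0 + ereal (s * (x - 1))) (at_right x)"
    by (rule tendsto_add_ereal_nonneg[OF L0f _ l1 l2]) simp
  then show ?thesis by (auto simp: h_def)
qed

lemma lim_at_b:
  assumes F: "F1 a b f" and sg: "\<forall>t\<in>ioo a b. s * (t - 1) \<le> f t" and bx: "b = ereal x"
  shows "\<exists>L. ((\<lambda>t. ereal (f t)) \<longlongrightarrow> L) (at_left x)"
proof -
  note B = F1_basic[OF F]
  define h where "h t = f t - s * (t - 1)" for t
  interpret hfun "ioo a b" h
    using B sg convex_on_sub_affine[OF B(1), of s] by unfold_locales (auto simp: h_def[abs_def])
  define J where "J = {1<..<x::real}"
  have J: "t \<in> ioo a b" if "t \<in> J" for t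
  proof -
    have "1 < ereal t" using that by (simp add: J_def one_ereal_def)
    then have "a < ereal t" using B(3) by (rule order.strict_trans[rotated])
    then show ?thesis using that bx by (simp add: J_def ioo_def)
  qed
  have x1: "1 < x" using B(4) bx by (simp add: one_ereal_def)
  have "((\<lambda>t. ereal (h t)) \<longlongrightarrow> Sup ((\<lambda>t. ereal (h t)) ` ({..<x} \<inter> J))) (at x within ({..<x} \<inter> J))"
  proof (rule Lim_left_bound[where K="\<infinity>"])
    fix p q assume pq: "p \<in> J" "q \<in> J" "q < x" "p \<le> q"
    then have "h p \<le> h q" using right_mono[OF J[OF pq(1)] J[OF pq(2)] _ pq(4)] by (simp add: J_def)
    then show "ereal (h p) \<le> ereal (h q)" by simp
  qed simp
  moreover have "at x within ({..<x} \<inter> J) = at_left x"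
    by (rule at_within_nhd[of x "{1<..}"]) (auto simp: J_def x1)
  ultimately obtain L0 where L0: "((\<lambda>t. ereal (h t)) \<longlongrightarrow> L0) (at_left x)"
    and L0def: "L0 = Sup ((\<lambda>t. ereal (h t)) ` ({..<x} \<inter> J))" by auto
  have "(x + 1) / 2 \<in> {..<x} \<inter> J" using x1 by (auto simp: J_def)
  then have "ereal (h ((x + 1) / 2)) \<le> L0" unfolding L0def by (rule SUP_upper)
  then have L0f: "L0 \<noteq> - \<infinity>" by auto
  have l2: "((\<lambda>t. ereal (s * (t - 1))) \<longlongrightarrow> ereal (s * (x - 1))) (at_left x)"
    by (intro tendsto_intros)
  have "((\<lambda>t. ereal (h t) + ereal (s * (t - 1))) \<longlongrightarrow> L0 + ereal (s * (x - 1))) (at_left x)"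
    by (rule tendsto_add_ereal_nonneg[OF L0f _ L0 l2]) simp
  then show ?thesis by (auto simp: h_def)
qed



lemma fext_lower:
  assumes F: "F1 a b f" and sg: "\<forall>t\<in>ioo a b. s * (t - 1) \<le> f t"
    and G: "\<forall>t\<in>ioo a b. G t \<le> f t" and Gc: "continuous_on UNIV G"
  shows "ereal (G t) \<le> fext a b f t"
proof -
  note B = F1_basic[OF F]
  have Gt: "(G \<longlongrightarrow> G t) (at t within S)" for S
    using Gc by (meson UNIV_I continuous_on_def tendsto_within_subset top_greatest)
  consider "t \<in> ioo a b" | "t \<notin> ioo a b" "ereal t = a" | "t \<notin> ioo a b" "ereal t \<noteq> a" "ereal t = b"
    | "t \<notin> ioo a b" "ereal t \<noteq> a" "ereal t \<noteq> b" by blast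
  then show ?thesis
  proof cases
    case 1 then show ?thesis using G by (simp add: fext_def)
  next
    case 2
    obtain L where L: "((\<lambda>t. ereal (f t)) \<longlongrightarrow> L) (at_right t)"
      using lim_at_a[OF F sg 2(2)[symmetric]] by blast
    have t1: "t < 1" using B(3) unfolding 2(2)[symmetric] by (simp add: one_ereal_def)
    have ev: "eventually (\<lambda>y. ereal (G y) \<le> ereal (f y)) (at_right t)"
      unfolding eventually_at_right[OF t1]
    proof (intro exI[of _ 1] conjI allI impI)
      fix y assume y: "t < y" "y < 1"
      have "ereal y < 1" using y by (simp add: one_ereal_def)
      then have "ereal y < b" using B(4) by (rule order.strict_trans)
      then have "y \<in> ioo a b" using y 2 by (auto simp: ioo_def)
      then show "ereal (G y) \<le> ereal (f y)" using G by simp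
    qed (simp add: t1)
    have "ereal (G t) \<le> L"
      by (rule tendsto_le[OF _ L tendsto_ereal[OF Gt] ev]) simp
    moreover have "Lim (at_right t) (\<lambda>t. ereal (f t)) = L" by (rule tendsto_Lim[OF _ L]) simp
    ultimately show ?thesis using 2 by (simp add: fext_def)
  next
    case 3
    obtain L where L: "((\<lambda>t. ereal (f t)) \<longlongrightarrow> L) (at_left t)"
      using lim_at_b[OF F sg 3(3)[symmetric]] by blast
    have t1: "1 < t" using B(4) unfolding 3(3)[symmetric] by (simp add: one_ereal_def)
    have ev: "eventually (\<lambda>y. ereal (G y) \<le> ereal (f y)) (at_left t)"
      unfolding eventually_at_left[OF t1]
    proof (intro exI[of _ 1] conjI allI impI)
      fix y assume y: "y < t" "1 < y"
      have "1 < ereal y" using y by (simp add: one_ereal_def)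
      then have "a < ereal y" using B(3) by (rule order.strict_trans[rotated])
      then have "y \<in> ioo a b" using y 3 by (auto simp: ioo_def)
      then show "ereal (G y) \<le> ereal (f y)" using G by simp
    qed (simp add: t1)
    have "ereal (G t) \<le> L"
      by (rule tendsto_le[OF _ L tendsto_ereal[OF Gt] ev]) simp
    moreover have "Lim (at_left t) (\<lambda>t. ereal (f t)) = L" by (rule tendsto_Lim[OF _ L]) simp
    ultimately show ?thesis using 3 by (simp add: fext_def)
  next
    case 4 then show ?thesis by (simp add: fext_def)
  qed
qed

lemma e2ennreal_max0: "e2ennreal (max 0 x) = e2ennreal x"
  by (cases "x \<le> 0") (auto simp: e2ennreal_neg max_def)

lemma fdiv_lower_general:
  assumes ac: "absolutely_continuous \<mu> \<nu>" and kint: "integrable \<mu> k"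
    and le: "\<And>x. x \<in> space \<mu> \<Longrightarrow> ereal (k x) \<le> fext a b f (enn2real (RN_deriv \<mu> \<nu> x))"
  shows "ereal (\<integral>x. k x \<partial>\<mu>) \<le> fdiv a b f \<nu> \<mu>"
proof -
  define g where "g x = fext a b f (enn2real (RN_deriv \<mu> \<nu> x))" for x
  obtain r q where rq: "0 \<le> r" "0 \<le> q"
    "(\<integral>\<^sup>+x. ennreal (k x)\<partial>\<mu>) = ennreal r"
    "(\<integral>\<^sup>+x. ennreal (-k x)\<partial>\<mu>) = ennreal q" "integral\<^sup>L \<mu> k = r - q"
    using integrableE[OF kint] by metis
  have I1: "ennreal r \<le> (\<integral>\<^sup>+ x. e2ennreal (max 0 (g x)) \<partial>\<mu>)"
    unfolding rq(3)[symmetric]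
  proof (rule nn_integral_mono)
    fix x assume "x \<in> space \<mu>"
    then have "ereal (k x) \<le> g x" using le by (simp add: g_def)
    then have "e2ennreal (ereal (k x)) \<le> e2ennreal (g x)" by (rule e2ennreal_mono)
    then show "ennreal (k x) \<le> e2ennreal (max 0 (g x))" by (simp add: e2ennreal_max0)
  qed
  have I2: "(\<integral>\<^sup>+ x. e2ennreal (max 0 (- g x)) \<partial>\<mu>) \<le> ennreal q"
    unfolding rq(4)[symmetric]
  proof (rule nn_integral_mono)
    fix x assume "x \<in> space \<mu>"
    then have "ereal (k x) \<le> g x" using le by (simp add: g_def)
    then have "- g x \<le> ereal (- k x)" by (metis ereal_minus_le_minus uminus_ereal.simps(1))
    then have "e2ennreal (- g x) \<le> e2ennreal (ereal (- k x))" by (rule e2ennreal_mono)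
    then show "e2ennreal (max 0 (- g x)) \<le> ennreal (- k x)" by (simp add: e2ennreal_max0)
  qed
  have "ereal (integral\<^sup>L \<mu> k) = enn2ereal (ennreal r) - enn2ereal (ennreal q)"
    using rq by simp
  also have "\<dots> \<le> enn2ereal (\<integral>\<^sup>+ x. e2ennreal (max 0 (g x)) \<partial>\<mu>)
      - enn2ereal (\<integral>\<^sup>+ x. e2ennreal (max 0 (- g x)) \<partial>\<mu>)"
    by (rule ereal_minus_mono) (use I1 I2 in \<open>simp_all add: less_eq_ennreal.rep_eq\<close>)
  also have "\<dots> = fdiv a b f \<nu> \<mu>"
    using ac by (simp add: fdiv_def g_def Let_def)
  finally show ?thesis .
qed



lemma key:
  assumes lb: "\<And>t. ereal (s * (t - 1) + c * max 0 (t - 1 - d)) \<le> fext a b f t" and c: "0 \<le> c"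
    and \<mu>: "prob_space \<mu>" and \<nu>: "prob_space \<nu>" and sets: "sets \<nu> = sets \<mu>"
    and ac: "absolutely_continuous \<mu> \<nu>" and A: "A \<in> sets \<mu>"
  shows "ereal (c * (measure \<nu> A - (1 + d) * measure \<mu> A)) \<le> fdiv a b f \<nu> \<mu>"
proof -
  interpret \<mu>: prob_space \<mu> by fact
  interpret \<nu>: prob_space \<nu> by fact
  have sf: "sigma_finite_measure \<nu>" by (rule prob_space_imp_sigma_finite[OF \<nu>])
  define r where "r x = enn2real (RN_deriv \<mu> \<nu> x)" for x
  have A_nu: "A \<in> sets \<nu>" using A sets by simp
  have intA: "integrable \<nu> (indicator A :: _ \<Rightarrow> real)"
    using A_nu by (intro integrable_real_indicator) (auto simp: \<nu>.emeasure_eq_measure)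
  have int1: "integrable \<mu> (\<lambda>x. r x * indicator A x)"
    using \<mu>.RN_deriv_integrable[OF sf ac sets, of "indicator A"] intA A by (simp add: r_def)
  have eq1: "(\<integral>x. r x * indicator A x \<partial>\<mu>) = measure \<nu> A"
  proof -
    have "(\<integral>x. r x * indicator A x \<partial>\<mu>) = integral\<^sup>L \<nu> (indicator A)"
      using \<mu>.RN_deriv_integral[OF sf ac sets, of "indicator A"] A by (simp add: r_def)
    also have "\<dots> = measure \<nu> A" using A_nu by (simp add: Int_absorb2 sets.sets_into_space)
    finally show ?thesis .
  qed
  have int2: "integrable \<mu> (\<lambda>x. r x * 1)"
    using \<mu>.RN_deriv_integrable[OF sf ac sets, of "\<lambda>_. 1"] by (simp add: r_def)
  have eq2: "(\<integral>x. r x * 1 \<partial>\<mu>) = 1"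
  proof -
    have "(\<integral>x. r x * 1 \<partial>\<mu>) = integral\<^sup>L \<nu> (\<lambda>_. 1)"
      using \<mu>.RN_deriv_integral[OF sf ac sets, of "\<lambda>_. 1"] by (simp add: r_def)
    also have "\<dots> = 1" by (simp add: \<nu>.prob_space)
    finally show ?thesis .
  qed
  have intAm: "integrable \<mu> (indicator A :: _ \<Rightarrow> real)"
    using A by (intro integrable_real_indicator) (auto simp: \<mu>.emeasure_eq_measure)
  define k where "k x = (s * (r x * 1) - s) + (c * (r x * indicator A x) - (c * (1 + d)) * indicator A x)" for x
  have i1: "integrable \<mu> (\<lambda>x. s * (r x * 1))" using int2 by (rule integrable_mult_right)
  have i2: "integrable \<mu> (\<lambda>x. c * (r x * indicator A x))" using int1 by (rule integrable_mult_right)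
  have i3: "integrable \<mu> (\<lambda>x. (c * (1 + d)) * indicator A x)" using intAm by (rule integrable_mult_right)
  have i4: "integrable \<mu> (\<lambda>x. s)" by simp
  have i5: "integrable \<mu> (\<lambda>x. s * (r x * 1) - s)" using i1 i4 by (rule Bochner_Integration.integrable_diff)
  have i6: "integrable \<mu> (\<lambda>x. c * (r x * indicator A x) - (c * (1 + d)) * indicator A x)" using i2 i3 by (rule Bochner_Integration.integrable_diff)
  have kint: "integrable \<mu> k" unfolding k_def using i5 i6 by (rule Bochner_Integration.integrable_add)
  have kval: "(\<integral>x. k x \<partial>\<mu>) = c * (measure \<nu> A - (1 + d) * measure \<mu> A)"
  proof -
    have "(\<integral>x. k x \<partial>\<mu>) = (\<integral>x. s * (r x * 1) - s \<partial>\<mu>) + (\<integral>x. c * (r x * indicator A x) - (c * (1 + d)) * indicator A x \<partial>\<mu>)"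
      unfolding k_def using i5 i6 by (rule Bochner_Integration.integral_add)
    also have "(\<integral>x. s * (r x * 1) - s \<partial>\<mu>) = (\<integral>x. s * (r x * 1) \<partial>\<mu>) - (\<integral>x. s \<partial>\<mu>)"
      using i1 i4 by (rule Bochner_Integration.integral_diff)
    also have "(\<integral>x. c * (r x * indicator A x) - (c * (1 + d)) * indicator A x \<partial>\<mu>)
        = (\<integral>x. c * (r x * indicator A x) \<partial>\<mu>) - (\<integral>x. (c * (1 + d)) * indicator A x \<partial>\<mu>)"
      using i2 i3 by (rule Bochner_Integration.integral_diff)
    also have "(\<integral>x. (c * (1 + d)) * indicator A x \<partial>\<mu>) = (c * (1 + d)) * measure \<mu> A"
      using A by (simp add: Int_absorb2 sets.sets_into_space)
    finally show ?thesis using eq1 eq2 by (simp add: \<mu>.prob_space algebra_simps)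
  qed
  have kle: "ereal (k x) \<le> fext a b f (enn2real (RN_deriv \<mu> \<nu> x))" for x
  proof -
    have "k x \<le> s * (r x - 1) + c * max 0 (r x - 1 - d)"
    proof (cases "x \<in> A")
      case True
      have "c * (r x - 1 - d) \<le> c * max 0 (r x - 1 - d)" using c by (intro mult_left_mono) auto
      then show ?thesis using True by (simp add: k_def algebra_simps)
    next
      case False
      have "0 \<le> c * max 0 (r x - 1 - d)" using c by simp
      then show ?thesis using False by (simp add: k_def algebra_simps)
    qed
    then have "ereal (k x) \<le> ereal (s * (r x - 1) + c * max 0 (r x - 1 - d))" by simp
    also have "\<dots> \<le> fext a b f (r x)" by (rule lb)
    finally show ?thesis by (simp add: r_def)
  qed
  show ?thesis using fdiv_lower_general[OF ac kint kle] kval by simp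
qed



lemma strict_pos:
  assumes F: "F1 a b f" and sg: "\<forall>t\<in>ioo a b. s * (t - 1) \<le> f t"
    and hs: "\<exists>e>0. strictly_convex_on {1 - e<..<1 + e} f"
  shows "\<exists>d0>0. \<forall>d. 0 < d \<and> d \<le> d0 \<longrightarrow> 1 + d \<in> ioo a b \<and> 0 < f (1 + d) - s * d"
proof -
  note B = F1_basic[OF F]
  obtain e where e: "e > 0" "strictly_convex_on {1 - e<..<1 + e} f" using hs by blast
  obtain z where z: "1 < ereal z" "ereal z < b" using ereal_dense2[OF B(4)] by blast
  have z1: "1 < z" using z(1) by (simp add: one_ereal_def)
  define d0 where "d0 = min (e / 2) (z - 1)"
  have d0: "d0 > 0" using e z1 by (simp add: d0_def)
  have inI: "1 + d \<in> ioo a b" if "0 \<le> d" "d \<le> d0" for d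
  proof -
    have "1 + d \<le> z" using that by (simp add: d0_def)
    then have "ereal (1 + d) < b" using z(2) by (meson ereal_less_eq(3) order.strict_trans1)
    moreover have "a < ereal (1 + d)" using B(3) that by (metis ereal_less_eq(3) le_add_same_cancel1 one_ereal_def order.strict_trans2)
    ultimately show ?thesis by (simp add: ioo_def)
  qed
  show ?thesis
  proof (intro exI[of _ d0] conjI allI impI d0)
    fix d assume d: "0 < d \<and> d \<le> d0"
    show "1 + d \<in> ioo a b" using inI d by simp
    have "f ((1/2) * 1 + (1 - 1/2) * (1 + d)) < (1/2) * f 1 + (1 - 1/2) * f (1 + d)"
      using e(2) d e(1) unfolding strictly_convex_on_def
      by (elim ballE[of _ _ 1] ballE[of _ _ "1 + d"] allE[of _ "1/2"]) (auto simp: d0_def)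
    then have lt: "f (1 + d / 2) < f (1 + d) / 2" using B(2) by (simp add: field_simps)
    have "s * (1 + d / 2 - 1) \<le> f (1 + d / 2)" using sg inI[of "d/2"] d by auto
    then show "0 < f (1 + d) - s * d" using lt by simp
  qed
qed

lemma bound:
  assumes F: "F1 a b f" and hs: "\<exists>e>0. strictly_convex_on {1 - e<..<1 + e} f"
  shows "\<exists>s d0. d0 > 0 \<and> (\<forall>d. 0 < d \<and> d \<le> d0 \<longrightarrow>
     (\<exists>c>0. \<forall>t. ereal (s * (t - 1) + c * max 0 (t - 1 - d)) \<le> fext a b f t))"
proof -
  note B = F1_basic[OF F]
  obtain s where sg: "\<forall>t\<in>ioo a b. s * (t - 1) \<le> f t" using F1_subgrad[OF F] by blast
  define h where "h t = f t - s * (t - 1)" for t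
  interpret hfun "ioo a b" h
    using B sg convex_on_sub_affine[OF B(1), of s] by unfold_locales (auto simp: h_def[abs_def])
  obtain d0 where d0: "d0 > 0" "\<forall>d. 0 < d \<and> d \<le> d0 \<longrightarrow> 1 + d \<in> ioo a b \<and> 0 < f (1 + d) - s * d"
    using strict_pos[OF F sg hs] by blast
  show ?thesis
  proof (rule exI[of _ s], rule exI[of _ d0], intro conjI allI impI d0(1))
    fix d assume d: "0 < d \<and> d \<le> d0"
    then have dI: "1 + d \<in> ioo a b" and hpos: "0 < h (1 + d)" using d0(2) by (auto simp: h_def)
    define c where "c = h (1 + d) / d"
    have c: "c > 0" using hpos d by (simp add: c_def)
    define G where "G t = s * (t - 1) + c * max 0 (t - 1 - d)" for t
    have G: "\<forall>t\<in>ioo a b. G t \<le> f t"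
    proof
      fix t assume t: "t \<in> ioo a b"
      have "c * max 0 (t - 1 - d) \<le> h t" using lower_lin[OF _ dI t] d unfolding c_def by simp
      then show "G t \<le> f t" unfolding G_def h_def by linarith
    qed
    have Gc: "continuous_on UNIV G" unfolding G_def by (intro continuous_intros)
    have lb: "ereal (s * (t - 1) + c * max 0 (t - 1 - d)) \<le> fext a b f t" for t
      using fext_lower[OF F sg G Gc, of t] by (simp add: G_def)
    show "\<exists>c>0. \<forall>t. ereal (s * (t - 1) + c * max 0 (t - 1 - d)) \<le> fext a b f t"
      using lb c by blast
  qed
qed



lemma conv_general:
  fixes \<mu> \<nu> :: "nat \<Rightarrow> 'a measure"
  assumes F: "F1 a b f" and hs: "\<exists>e>0. strictly_convex_on {1 - e<..<1 + e} f"
    and \<mu>: "\<And>n. prob_space (\<mu> n)" and \<nu>: "\<And>n. prob_space (\<nu> n)"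
    and s\<mu>: "\<And>n. sets (\<mu> n) = S" and s\<nu>: "\<And>n. sets (\<nu> n) = S"
    and D: "(\<lambda>n. fdiv a b f (\<nu> n) (\<mu> n)) \<longlonglongrightarrow> 0" and A: "A \<in> S"
  shows "(\<lambda>n. measure (\<nu> n) A - measure (\<mu> n) A) \<longlonglongrightarrow> 0"
proof -
  obtain s d0 where d0: "d0 > 0" and bd: "\<And>d. 0 < d \<Longrightarrow> d \<le> d0 \<Longrightarrow>
     (\<exists>c>0. \<forall>t. ereal (s * (t - 1) + c * max 0 (t - 1 - d)) \<le> fext a b f t)"
    using bound[OF F hs] by blast
  have main: "eventually (\<lambda>n. measure (\<nu> n) B - measure (\<mu> n) B < 2 * d) sequentially"
    if B: "B \<in> S" and d: "0 < d" "d \<le> d0" for B d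
  proof -
    obtain c where c: "c > 0" and lb: "\<And>t. ereal (s * (t - 1) + c * max 0 (t - 1 - d)) \<le> fext a b f t"
      using bd[OF d] by blast
    have "0 < ereal (c * d)" using c d by simp
    then have ev: "eventually (\<lambda>n. fdiv a b f (\<nu> n) (\<mu> n) < ereal (c * d)) sequentially"
      using order_tendstoD(2)[OF D] by (simp add: zero_ereal_def)
    show ?thesis using ev
    proof eventually_elim
      case (elim n)
      have ac: "absolutely_continuous (\<mu> n) (\<nu> n)"
      proof (rule ccontr)
        assume "\<not> absolutely_continuous (\<mu> n) (\<nu> n)"
        then have "fdiv a b f (\<nu> n) (\<mu> n) = \<infinity>" by (simp add: fdiv_def)
        then show False using elim by simp
      qed
      have "ereal (c * (measure (\<nu> n) B - (1 + d) * measure (\<mu> n) B)) \<le> fdiv a b f (\<nu> n) (\<mu> n)"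
        by (rule key[OF lb less_imp_le[OF c] \<mu> \<nu>]) (use s\<mu> s\<nu> ac B in auto)
      then have "ereal (c * (measure (\<nu> n) B - (1 + d) * measure (\<mu> n) B)) < ereal (c * d)"
        using elim by (rule order.strict_trans1)
      then have "c * (measure (\<nu> n) B - (1 + d) * measure (\<mu> n) B) < c * d"
        by simp
      then have "measure (\<nu> n) B - (1 + d) * measure (\<mu> n) B < d"
        using c by simp
      moreover have "d * measure (\<mu> n) B \<le> d"
        using d prob_space.prob_le_1[OF \<mu>] by (simp add: mult_left_le)
      ultimately show ?case by (simp add: algebra_simps)
    qed
  qed
  define \<Omega> where "\<Omega> = space (\<mu> 0)"
  have sp\<mu>: "space (\<mu> n) = \<Omega>" for n
    unfolding \<Omega>_def by (rule sets_eq_imp_space_eq) (simp add: s\<mu>)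
  have sp\<nu>: "space (\<nu> n) = \<Omega>" for n
    unfolding \<Omega>_def by (rule sets_eq_imp_space_eq) (simp add: s\<mu> s\<nu>)
  have Ac: "\<Omega> - A \<in> S"
    using A s\<mu>[of 0] unfolding \<Omega>_def by (metis sets.compl_sets)
  have c\<mu>: "measure (\<mu> n) (\<Omega> - A) = 1 - measure (\<mu> n) A" for n
    using prob_space.prob_compl[OF \<mu>, of A n] A s\<mu> sp\<mu> by simp
  have c\<nu>: "measure (\<nu> n) (\<Omega> - A) = 1 - measure (\<nu> n) A" for n
    using prob_space.prob_compl[OF \<nu>, of A n] A s\<nu> sp\<nu> by simp
  show ?thesis
    unfolding tendsto_iff
  proof (intro allI impI)
    fix e :: real assume e: "e > 0"
    define d where "d = min d0 (e / 2)"
    have d: "0 < d" "d \<le> d0" "2 * d \<le> e" using e d0 by (auto simp: d_def)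
    show "eventually (\<lambda>n. dist (measure (\<nu> n) A - measure (\<mu> n) A) 0 < e) sequentially"
      using main[OF A d(1,2)] main[OF Ac d(1,2)]
    proof eventually_elim
      case (elim n)
      then show ?case using d(3) c\<mu>[of n] c\<nu>[of n] by (simp add: dist_real_def abs_less_iff)
    qed
  qed
qed



lemma approx_integral:
  assumes Q: "prob_space Q" and g: "g \<in> borel_measurable Q" and M: "\<And>x. x \<in> space Q \<Longrightarrow> \<bar>g x\<bar> \<le> M"
    and eta: "\<eta> > 0"
  shows "\<bar>(\<integral>x. g x \<partial>Q) - (\<Sum>k\<in>{\<lfloor>- M / \<eta>\<rfloor>..\<lfloor>M / \<eta>\<rfloor>}. \<eta> * of_int k * measure Q {x\<in>space Q. \<lfloor>g x / \<eta>\<rfloor> = k})\<bar> \<le> \<eta>"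
proof -
  interpret Q: prob_space Q by fact
  define K where "K = {\<lfloor>- M / \<eta>\<rfloor>..\<lfloor>M / \<eta>\<rfloor>}"
  define E where "E k = {x\<in>space Q. \<lfloor>g x / \<eta>\<rfloor> = k}" for k
  define q where "q x = \<eta> * of_int \<lfloor>g x / \<eta>\<rfloor>" for x
  have qm: "q \<in> borel_measurable Q" unfolding q_def using g by measurable
  have Em: "E k \<in> sets Q" for k unfolding E_def using g by measurable
  have gq: "0 \<le> g x - q x \<and> g x - q x \<le> \<eta>" for x
  proof -
    have "of_int \<lfloor>g x / \<eta>\<rfloor> \<le> g x / \<eta>" "g x / \<eta> < of_int \<lfloor>g x / \<eta>\<rfloor> + 1"
      by linarith+
    then have "\<eta> * of_int \<lfloor>g x / \<eta>\<rfloor> \<le> \<eta> * (g x / \<eta>)" "\<eta> * (g x / \<eta>) < \<eta> * (of_int \<lfloor>g x / \<eta>\<rfloor> + 1)"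
      using eta by (simp_all only: mult_left_mono mult_strict_left_mono less_imp_le)
    then have "\<eta> * of_int \<lfloor>g x / \<eta>\<rfloor> \<le> g x" "g x < \<eta> * (of_int \<lfloor>g x / \<eta>\<rfloor> + 1)"
      using eta by simp_all
    then show ?thesis by (simp add: q_def algebra_simps)
  qed
  have gi: "integrable Q g"
    using M g by (intro Q.integrable_const_bound[where B=M]) auto
  have qi: "integrable Q q"
  proof (rule Q.integrable_const_bound[where B="M + \<eta>"])
    show "AE x in Q. norm (q x) \<le> M + \<eta>"
    proof (rule AE_I2)
      fix x assume "x \<in> space Q"
      then show "norm (q x) \<le> M + \<eta>" using M[of x] gq[of x] by (simp add: abs_le_iff)
    qed
  qed fact
  have d1: "(\<integral>x. g x - q x \<partial>Q) \<le> (\<integral>x. \<eta> \<partial>Q)"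
    by (rule Bochner_Integration.integral_mono) (use gi qi gq in auto)
  have d2: "(\<integral>x. 0 \<partial>Q) \<le> (\<integral>x. g x - q x \<partial>Q)"
    by (rule Bochner_Integration.integral_mono) (use gi qi gq in auto)
  have diff: "\<bar>(\<integral>x. g x \<partial>Q) - (\<integral>x. q x \<partial>Q)\<bar> \<le> \<eta>"
    using d1 d2 gi qi by (simp add: Q.prob_space)
  have qsum: "q x = (\<Sum>k\<in>K. \<eta> * of_int k * indicator (E k) x)" if x: "x \<in> space Q" for x
  proof -
    have "- M / \<eta> \<le> g x / \<eta>" "g x / \<eta> \<le> M / \<eta>"
    proof -
      have "- M \<le> g x" "g x \<le> M" using M[OF x] by (auto simp: abs_le_iff)
      then show "- M / \<eta> \<le> g x / \<eta>" "g x / \<eta> \<le> M / \<eta>"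
        using eta divide_right_mono[of "- M" "g x" \<eta>] divide_right_mono[of "g x" M \<eta>] by simp_all
    qed
    then have kin: "\<lfloor>g x / \<eta>\<rfloor> \<in> K" unfolding K_def by (auto intro: floor_mono)
    have "(\<Sum>k\<in>K. \<eta> * of_int k * indicator (E k) x) = (\<Sum>k\<in>K. if k = \<lfloor>g x / \<eta>\<rfloor> then \<eta> * of_int k else 0)"
      by (rule sum.cong) (auto simp: E_def indicator_def x)
    also have "\<dots> = \<eta> * of_int \<lfloor>g x / \<eta>\<rfloor>" using kin by (simp add: sum.delta K_def)
    finally show ?thesis by (simp add: q_def)
  qed
  have "(\<integral>x. q x \<partial>Q) = (\<integral>x. (\<Sum>k\<in>K. \<eta> * of_int k * indicator (E k) x) \<partial>Q)"
    by (rule Bochner_Integration.integral_cong) (auto simp: qsum)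
  also have "\<dots> = (\<Sum>k\<in>K. (\<integral>x. \<eta> * of_int k * indicator (E k) x \<partial>Q))"
    by (rule Bochner_Integration.integral_sum) (auto simp: Em Q.emeasure_eq_measure)
  also have "\<dots> = (\<Sum>k\<in>K. \<eta> * of_int k * measure Q (E k))"
    using Em by (simp add: Int_absorb2 sets.sets_into_space)
  finally show ?thesis using diff by (simp add: K_def E_def)
qed



lemma setwise_integral:
  fixes g :: "'a \<Rightarrow> real"
  assumes P: "prob_space P" and Pn: "\<And>n. prob_space (Pn n)" and sets: "\<And>n. sets (Pn n) = sets P"
    and sw: "\<forall>A\<in>sets P. (\<lambda>n. measure (Pn n) A) \<longlonglongrightarrow> measure P A"
    and g: "g \<in> borel_measurable P" and M: "\<And>x. x \<in> space P \<Longrightarrow> \<bar>g x\<bar> \<le> M"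
  shows "(\<lambda>n. \<integral>x. g x \<partial>Pn n) \<longlonglongrightarrow> (\<integral>x. g x \<partial>P)"
  unfolding tendsto_iff
proof (intro allI impI)
  fix e :: real assume e: "e > 0"
  define \<eta> where "\<eta> = e / 4"
  have eta: "\<eta> > 0" using e by (simp add: \<eta>_def)
  define K where "K = {\<lfloor>- M / \<eta>\<rfloor>..\<lfloor>M / \<eta>\<rfloor>}"
  define E where "E k = {x\<in>space P. \<lfloor>g x / \<eta>\<rfloor> = k}" for k
  define S where "S Q = (\<Sum>k\<in>K. \<eta> * of_int k * measure Q (E k))" for Q
  have sp: "space (Pn n) = space P" for n by (rule sets_eq_imp_space_eq) (simp add: sets)
  have Em: "E k \<in> sets P" for k unfolding E_def using g by measurable
  have aP: "\<bar>(\<integral>x. g x \<partial>P) - S P\<bar> \<le> \<eta>"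
    using approx_integral[OF P g M eta] by (simp add: S_def K_def E_def)
  have aPn: "\<bar>(\<integral>x. g x \<partial>Pn n) - S (Pn n)\<bar> \<le> \<eta>" for n
  proof -
    have gn: "g \<in> borel_measurable (Pn n)" unfolding measurable_cong_sets[OF sets[of n] refl] by (rule g)
    show ?thesis using approx_integral[OF Pn gn _ eta, of M] M by (simp add: S_def K_def E_def sp)
  qed
  have "(\<lambda>n. S (Pn n)) \<longlonglongrightarrow> S P"
    unfolding S_def using sw Em by (intro tendsto_intros) auto
  then have ev: "eventually (\<lambda>n. dist (S (Pn n)) (S P) < \<eta>) sequentially"
    using eta by (simp add: tendsto_iff)
  show "eventually (\<lambda>n. dist (\<integral>x. g x \<partial>Pn n) (\<integral>x. g x \<partial>P) < e) sequentially"
    using ev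
  proof eventually_elim
    case (elim n)
    have "dist (\<integral>x. g x \<partial>Pn n) (\<integral>x. g x \<partial>P) < 3 * \<eta>"
      using elim aP aPn[of n] by (simp add: dist_real_def)
    then show ?case using e by (simp add: \<eta>_def)
  qed
qed



theorem theorem10:
  fixes a b :: ereal and f :: "real \<Rightarrow> real"
    and P :: "'a measure" and Pn :: "nat \<Rightarrow> 'a measure"
  assumes hF: "F1 a b f"
    and hw0: "right_deriv f 1 \<in> interior {y. legendre a b f y < \<infinity>}"
    and hstrict: "\<exists>e>0. strictly_convex_on {1 - e<..<1 + e} f"
    and hP: "prob_space P"
    and hPn: "\<And>n. prob_space (Pn n)"
    and hsets: "\<And>n. sets (Pn n) = sets P"
    and hconv: "(\<lambda>n. fdiv a b f (Pn n) P) \<longlonglongrightarrow> 0 \<or> (\<lambda>n. fdiv a b f P (Pn n)) \<longlonglongrightarrow> 0"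
  shows "(\<forall>A\<in>sets P. (\<lambda>n. measure (Pn n) A) \<longlonglongrightarrow> measure P A)
       \<and> (\<forall>d. Metric_space (space P) d \<and> sets P = metric_borel_sets (space P) d
             \<longrightarrow> weak_conv_metric (space P) d Pn P)"
proof -
  have part1: "\<forall>A\<in>sets P. (\<lambda>n. measure (Pn n) A) \<longlonglongrightarrow> measure P A"
  proof
    fix A assume A: "A \<in> sets P"
    from hconv show "(\<lambda>n. measure (Pn n) A) \<longlonglongrightarrow> measure P A"
    proof
      assume D: "(\<lambda>n. fdiv a b f (Pn n) P) \<longlonglongrightarrow> 0"
      have "(\<lambda>n. measure (Pn n) A - measure P A) \<longlonglongrightarrow> 0"
        by (rule conv_general[OF hF hstrict hP hPn _ hsets D A]) simp
      from tendsto_add[OF this tendsto_const[of "measure P A"]]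
      show ?thesis by simp
    next
      assume D: "(\<lambda>n. fdiv a b f P (Pn n)) \<longlonglongrightarrow> 0"
      have "(\<lambda>n. measure P A - measure (Pn n) A) \<longlonglongrightarrow> 0"
        by (rule conv_general[OF hF hstrict hPn hP hsets _ D A]) simp
      from tendsto_diff[OF tendsto_const[of "measure P A"] this]
      show ?thesis by simp
    qed
  qed
  have part2: "weak_conv_metric (space P) d Pn P"
    if ms: "Metric_space (space P) d" and sb: "sets P = metric_borel_sets (space P) d" for d
  proof -
    interpret Metric_space "space P" d by (rule ms)
    show ?thesis unfolding weak_conv_metric_def
    proof (intro allI impI, elim conjE)
      fix g :: "'a \<Rightarrow> real"
      assume gc: "continuous_map mtopology euclideanreal g" and gb: "bounded (g ` space P)"
      obtain M where M0: "\<forall>y\<in>g ` space P. \<bar>y\<bar> \<le> M"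
        using gb unfolding bounded_real by blast
      have M: "\<And>x. x \<in> space P \<Longrightarrow> \<bar>g x\<bar> \<le> M" using M0 by blast
      have gm: "g \<in> borel_measurable P"
      proof (rule borel_measurableI)
        fix S :: "real set" assume S: "open S"
        have So: "openin euclideanreal S" using S open_openin by metis
        have "openin mtopology {x \<in> topspace mtopology. g x \<in> S}"
          by (rule openin_continuous_map_preimage[OF gc So])
        moreover have "g -` S \<inter> space P = {x \<in> topspace mtopology. g x \<in> S}"
          unfolding topspace_mtopology by blast
        ultimately have "g -` S \<inter> space P \<in> {U. openin mtopology U}" by simp
        then show "g -` S \<inter> space P \<in> sets P"
          unfolding sb metric_borel_sets_def by (rule sigma_sets.Basic)
      qed
      show "(\<lambda>n. \<integral>x. g x \<partial>Pn n) \<longlonglongrightarrow> (\<integral>x. g x \<partial>P)"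
        by (rule setwise_integral[OF hP hPn hsets part1 gm M])
    qed
  qed
  show ?thesis using part1 part2 by blast
qed

end
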